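(* A square complex matrix $U$ is unitary with all entries in $\mathcal{R}_{12}$ if and only if $U$ can be expressed as a product of one-level operators of type $\zeta_{12}$ and two-level operators of type $X$ and of type $H'$ (of the same dimension as $U$).
   Context: $\zeta_{12}=e^{2\pi i/12}$ and $\mathcal{R}_{12}$ is the smallest subring of $\mathbb{C}$ containing $1/2$ and $\zeta_{12}$. $X=\begin{bmatrix}0&1\\1&0\end{bmatrix}$ and $H'=\frac{1+i}{2}\begin{bmatrix}1&1\\1&-1\end{bmatrix}$. For $c\in\mathbb{C}$ and $0\le j\le m-1$, the one-level operator of type $c$ is the $m\times m$ matrix $c_{[j]}$ equal to the identity except that its $(j,j)$ entry is $c$. For $M\in\mathrm{M}_2(\mathbb{C})$ and $0\le j<j'\le m-1$, the two-level operator of type $M$ is the $m\times m$ matrix $M_{[j,j']}$ equal to the identity except that its entries in positions $(j,j),(j,j'),(j',j),(j',j')$ are $M_{1,1},M_{1,2},M_{2,1},M_{2,2}$ respectively. *)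

theory Defs
  imports Complex_Main "Jordan_Normal_Form.Matrix"
begin

definition zeta12 :: complex where
  "zeta12 = cis (2 * pi / 12)"

inductive_set R12 :: "complex set" where
  half: "1/2 \<in> R12"
| zeta: "zeta12 \<in> R12"
| one: "1 \<in> R12"
| neg: "a \<in> R12 \<Longrightarrow> - a \<in> R12"
| add: "a \<in> R12 \<Longrightarrow> b \<in> R12 \<Longrightarrow> a + b \<in> R12"
| mult: "a \<in> R12 \<Longrightarrow> b \<in> R12 \<Longrightarrow> a * b \<in> R12"

definition Xmat :: "complex mat" where
  "Xmat = mat_of_rows_list 2 [[0, 1], [1, 0]]"

definition Hprime :: "complex mat" where
  "Hprime = ((1 + \<i>) / 2) \<cdot>\<^sub>m mat_of_rows_list 2 [[1, 1], [1, -1]]"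

definition conj_transpose :: "complex mat \<Rightarrow> complex mat" where
  "conj_transpose U = mat (dim_col U) (dim_row U) (\<lambda>(i, j). cnj (U $$ (j, i)))"

definition unitary_mat :: "complex mat \<Rightarrow> bool" where
  "unitary_mat U \<longleftrightarrow> (\<exists>n. U \<in> carrier_mat n n \<and>
      U * conj_transpose U = 1\<^sub>m n \<and> conj_transpose U * U = 1\<^sub>m n)"

definition one_level :: "nat \<Rightarrow> complex \<Rightarrow> nat \<Rightarrow> complex mat" where
  "one_level m c j = mat m m (\<lambda>(a, b). if a = j \<and> b = j then c
                                       else if a = b then 1 else 0)"

definition two_level :: "nat \<Rightarrow> complex mat \<Rightarrow> nat \<Rightarrow> nat \<Rightarrow> complex mat" where
  "two_level m M j j' = mat m m (\<lambda>(a, b).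
      if a = j \<and> b = j then M $$ (0, 0)
      else if a = j \<and> b = j' then M $$ (0, 1)
      else if a = j' \<and> b = j then M $$ (1, 0)
      else if a = j' \<and> b = j' then M $$ (1, 1)
      else if a = b then 1 else 0)"

definition generators :: "nat \<Rightarrow> complex mat set" where
  "generators m =
     {one_level m zeta12 j | j. j < m} \<union>
     {two_level m Xmat j j' | j j'. j < j' \<and> j' < m} \<union>
     {two_level m Hprime j j' | j j'. j < j' \<and> j' < m}"

definition is_product_of :: "nat \<Rightarrow> complex mat set \<Rightarrow> complex mat \<Rightarrow> bool" where
  "is_product_of m S U \<longleftrightarrow>
     (\<exists>gs. set gs \<subseteq> S \<and> U = foldr (\<lambda>g acc. g * acc) gs (1\<^sub>m m))"

end

theory Submission
  imports Defs "Jordan_Normal_Form.Determinant"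
begin

lemma zeta_eq: "zeta12 = Complex (sqrt 3 / 2) (1/2)"
proof -
  have "2 * pi / 12 = pi / 6" by simp
  then show ?thesis unfolding zeta12_def by (simp add: complex_eq_iff cos_30 sin_30)
qed

lemma no_sq3: "(p::int)^2 = 3*q^2 \<Longrightarrow> q = 0"
proof (induction "nat \<bar>q\<bar>" arbitrary: p q rule: less_induct)
  case less
  have d3: "3 dvd x" if "x^2 = 3*y^2" for x y :: int
  proof -
    have "x mod 3 = 0 \<or> x mod 3 = 1 \<or> x mod 3 = 2" by arith
    moreover have "(x^2) mod 3 = ((x mod 3)^2) mod 3" by (simp add: power_mod)
    moreover have "(x^2) mod 3 = 0" using that by simp
    ultimately have "x mod 3 = 0" by auto
    then show ?thesis by auto
  qed
  obtain p' where p: "p = 3*p'" using d3[OF less.prems] by auto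
  have qq: "q^2 = 3*p'^2" using less.prems p by (simp add: power_mult_distrib)
  obtain q' where q: "q = 3*q'" using d3[OF qq] by auto
  have e: "p'^2 = 3*q'^2" using \<open>q^2 = 3*p'^2\<close> q by (simp add: power_mult_distrib)
  show ?case
  proof (rule ccontr)
    assume "q \<noteq> 0"
    then have "nat \<bar>q'\<bar> < nat \<bar>q\<bar>" using q by auto
    from less.hyps[OF this e] have "q' = 0" .
    with q \<open>q \<noteq> 0\<close> show False by simp
  qed
qed

lemma irr3: fixes p q :: int assumes "of_int p + of_int q * sqrt 3 = (0::real)" shows "p = 0 \<and> q = 0"
proof -
  have "of_int p = - of_int q * sqrt 3" using assms by (simp add: algebra_simps)
  then have "(of_int p)^2 = (of_int q)^2 * (sqrt 3)^2" by (simp add: power_mult_distrib)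
  then have "real_of_int (p^2) = real_of_int (3*q^2)" by simp
  then have "p^2 = 3*q^2" by linarith
  then have "q = 0" by (rule no_sq3)
  then show ?thesis using assms by simp
qed

type_synonym q4 = "int \<times> int \<times> int \<times> int"

fun eltq :: "q4 \<Rightarrow> complex" where
  "eltq (a,b,c,d) = Complex (a + b * sqrt 3 / 2 + c / 2) (b / 2 + c * sqrt 3 / 2 + d)"

fun addq :: "q4 \<Rightarrow> q4 \<Rightarrow> q4" where
  "addq (a,b,c,d) (e,f,g,h) = (a+e,b+f,c+g,d+h)"
fun negq :: "q4 \<Rightarrow> q4" where
  "negq (a,b,c,d) = (-a,-b,-c,-d)"
fun mulq :: "q4 \<Rightarrow> q4 \<Rightarrow> q4" where
  "mulq (a,b,c,d) (e,f,g,h) =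
    (let p0 = a*e; p1 = a*f+b*e; p2 = a*g+b*f+c*e; p3 = a*h+b*g+c*f+d*e;
         p4 = b*h+c*g+d*f; p5 = c*h+d*g; p6 = d*h
     in (p0 - p4 - p6, p1 - p5, p2 + p4, p3 + p5))"
fun rot :: "q4 \<Rightarrow> q4" where
  "rot (a,b,c,d) = (-d, a, b+d, c)"
fun Aq :: "q4 \<Rightarrow> int" where
  "Aq (a,b,c,d) = a*a+b*b+c*c+d*d+a*c+b*d"
fun Bq :: "q4 \<Rightarrow> int" where
  "Bq (a,b,c,d) = a*b+b*c+c*d"

lemma s3sq: "sqrt 3 * sqrt 3 = (3::real)" by simp

lemma eltq_add: "eltq q + eltq r = eltq (addq q r)"
  by (cases q; cases r) (simp add: complex_eq_iff field_simps)
lemma eltq_neg: "- eltq q = eltq (negq q)"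
  by (cases q) (simp add: complex_eq_iff field_simps)
lemma eltq_mul: "eltq q * eltq r = eltq (mulq q r)"
proof -
  obtain a b c d where q: "q = (a,b,c,d)" by (cases q) auto
  obtain e f g h where r: "r = (e,f,g,h)" by (cases r) auto
  have s: "sqrt 3 * sqrt 3 = (3::real)" by simp
  show ?thesis unfolding q r
    using s by (simp add: complex_eq_iff Let_def field_simps)
qed
lemma eltq_rot: "zeta12 * eltq q = eltq (rot q)"
proof -
  obtain a b c d where q: "q = (a,b,c,d)" by (cases q) auto
  have s: "sqrt 3 * sqrt 3 = (3::real)" by simp
  show ?thesis unfolding q zeta_eq
    using s by (simp add: complex_eq_iff Let_def field_simps)
qed
lemma eltq_norm: "(cmod (eltq q))^2 = of_int (Aq q) + of_int (Bq q) * sqrt 3"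
proof -
  obtain a b c d where q: "q = (a,b,c,d)" by (cases q) auto
  have s: "sqrt 3 * sqrt 3 = (3::real)" by simp
  show ?thesis unfolding q cmod_power2
    using s by (simp add: field_simps power2_eq_square)
qed

lemma P1: "even (Aq q + Bq q) \<Longrightarrow> even (Aq q) \<and> even (Bq q)"
  by (cases q) (auto simp: even_add even_mult_iff)

definition delta :: complex where "delta = eltq (1,0,0,1)"

lemma P2: assumes "even (Aq q + Bq q)" shows "\<exists>w. eltq q = delta * eltq w"
proof -
  obtain a b c d where q: "q = (a,b,c,d)" by (cases q) auto
  have par: "even (a+b+d) \<and> even (b+c) \<and> even (c-b) \<and> even (d-a-c)"
    using assms unfolding q by (auto simp: even_add even_mult_iff)
  then obtain x1 x2 x3 x4 where h: "a+b+d = 2*x1" "b+c = 2*x2" "c-b = 2*x3" "d-a-c = 2*x4"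
    by (meson dvdE)
  have "mulq (1,0,0,1) (x1,x2,x3,x4) = q" unfolding q using h
    by (simp add: Let_def)
  then show ?thesis unfolding delta_def eltq_mul by metis
qed

fun rotn :: "nat \<Rightarrow> q4 \<Rightarrow> q4" where
  "rotn 0 q = q" | "rotn (Suc n) q = rot (rotn n q)"

lemma eltq_rotn: "zeta12 ^ n * eltq q = eltq (rotn n q)"
  by (induction n) (auto simp: eltq_rot[symmetric] mult.assoc)

lemma A4: "4 * Aq (a,b,c,d) = (2*a+c)^2 + 3*c^2 + (2*b+d)^2 + 3*d^2"
  by (simp add: power2_eq_square algebra_simps)

lemma A_nonneg: "Aq q \<ge> 0"
proof -
  obtain a b c d where q: "q = (a,b,c,d)" by (cases q) auto
  have "4 * Aq q \<ge> 0" unfolding q A4 by simp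
  then show ?thesis by simp
qed

lemma A_zero: "Aq q = 0 \<Longrightarrow> q = (0,0,0,0)"
proof -
  obtain a b c d where q: "q = (a,b,c,d)" by (cases q) auto
  assume "Aq q = 0"
  then have "(2*a+c)^2 + 3*c^2 + (2*b+d)^2 + 3*d^2 = 0" using A4[of a b c d] q by simp
  then have "c = 0 \<and> d = 0 \<and> 2*a+c = 0 \<and> 2*b+d = 0"
    by (smt (verit) zero_le_power2 power2_eq_square mult_eq_0_iff)
  then show ?thesis using q by simp
qed

lemma A_one: assumes "Aq q = 1" shows "\<exists>t<12. q = rotn t (1,0,0,0)"
proof -
  obtain a b c d where q: "q = (a,b,c,d)" by (cases q) auto
  have e: "(2*a+c)^2 + 3*c^2 + (2*b+d)^2 + 3*d^2 = 4" using A4[of a b c d] q assms by simp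
  have "c^2 \<le> 1" using e by (smt (verit) zero_le_power2)
  then have c: "\<bar>c\<bar> \<le> 1" by (simp add: abs_square_le_1)
  have "d^2 \<le> 1" using e by (smt (verit) zero_le_power2)
  then have d: "\<bar>d\<bar> \<le> 1" by (simp add: abs_square_le_1)
  have "(2*a+c)^2 \<le> 4" using e zero_le_power2[of c] zero_le_power2[of "2*b+d"] zero_le_power2[of d] by linarith
  then have a: "\<bar>2*a+c\<bar> \<le> 2" using abs_le_square_iff[of "2*a+c" 2] by simp
  have "(2*b+d)^2 \<le> 4" using e zero_le_power2[of c] zero_le_power2[of "2*a+c"] zero_le_power2[of d] by linarith
  then have b: "\<bar>2*b+d\<bar> \<le> 2" using abs_le_square_iff[of "2*b+d" 2] by simp
  have "a = -1 \<or> a = 0 \<or> a = 1" "b = -1 \<or> b = 0 \<or> b = 1" "c = -1 \<or> c = 0 \<or> c = 1" "d = -1 \<or> d = 0 \<or> d = 1" using a b c d by auto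
  then have "q \<in> set [(1, 0, 0, 0), (0, 1, 0, 0), (0, 0, 1, 0), (0, 0, 0, 1), (-1, 0, 1, 0), (0, -1, 0, 1), (-1, 0, 0, 0), (0, -1, 0, 0), (0, 0, -1, 0), (0, 0, 0, -1), (1, 0, -1, 0), (0, 1, 0, -1)]"
    using assms unfolding q by (elim disjE; simp)
  also have "[(1, 0, 0, 0), (0, 1, 0, 0), (0, 0, 1, 0), (0, 0, 0, 1), (-1, 0, 1, 0), (0, -1, 0, 1), (-1, 0, 0, 0), (0, -1, 0, 0), (0, 0, -1, 0), (0, 0, 0, -1), (1, 0, -1, 0), (0, 1, 0, -1)] = map (\<lambda>t. rotn t (1,0,0,0)) [0..<12]"
    by (simp add: eval_nat_numeral upt_rec)
  finally show ?thesis by auto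
qed

lemma ev4: assumes "even x1" "even x2" "even x3" "even x4"
  shows "\<exists>y1 y2 y3 y4. eltq (x1,x2,x3,x4) = 2 * eltq (y1,y2,y3,y4)"
proof -
  obtain y1 y2 y3 y4 where "x1 = 2*y1" "x2 = 2*y2" "x3 = 2*y3" "x4 = 2*y4"
    using assms by (meson dvdE)
  then have "eltq (x1,x2,x3,x4) = 2 * eltq (y1,y2,y3,y4)" by (simp add: complex_eq_iff field_simps)
  then show ?thesis by blast
qed

lemma P3: assumes "odd (Aq q + Bq q)" "odd (Aq r + Bq r)" "even (Bq q) = even (Bq r)"
  shows "\<exists>t<6. \<exists>w. eltq q + zeta12 ^ t * eltq r = 2 * eltq w"
proof -
  obtain a b c d where q: "q = (a,b,c,d)" by (cases q) auto
  obtain e f g h where r: "r = (e,f,g,h)" by (cases r) auto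
  have E: "eltq q + zeta12 ^ t * eltq r = eltq (addq q (rotn t r))" for t
    by (simp add: eltq_rotn eltq_add)
  have "(even (a+e) \<and> even (b+f) \<and> even (c+g) \<and> even (d+h)) \<or>
        (even (a-h) \<and> even (b+e) \<and> even (c+f+h) \<and> even (d+g)) \<or>
        (even (a-g) \<and> even (b-h) \<and> even (c+e+g) \<and> even (d+f+h)) \<or>
        (even (a-f-h) \<and> even (b-g) \<and> even (c+f) \<and> even (d+e+g)) \<or>
        (even (a-e-g) \<and> even (b-f-h) \<and> even (c+e) \<and> even (d+f)) \<or>
        (even (a-f) \<and> even (b-e-g) \<and> even (c-h) \<and> even (d+e))"
    using assms unfolding q r apply (simp only: Aq.simps Bq.simps even_add even_mult_iff even_diff)
    by argo
  then have "\<exists>t<6. \<exists>w. eltq (addq q (rotn t r)) = 2 * eltq w"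
  proof (elim disjE conjE)
    assume h: "even (a+e)" "even (b+f)" "even (c+g)" "even (d+h)"
    then show ?thesis apply (intro exI[of _ 0]) apply (simp add: q r del: eltq.simps)
      apply (rule ev4) apply (insert h) by (simp_all add: algebra_simps even_add even_diff)
  next
    assume h: "even (a-h)" "even (b+e)" "even (c+f+h)" "even (d+g)"
    then show ?thesis apply (intro exI[of _ 1]) apply (simp add: q r del: eltq.simps)
      apply (rule ev4) apply (insert h) by (simp_all add: algebra_simps even_add even_diff)
  next
    assume h: "even (a-g)" "even (b-h)" "even (c+e+g)" "even (d+f+h)"
    then show ?thesis apply (intro exI[of _ 2]) apply (simp add: q r numeral_2_eq_2 del: eltq.simps)
      apply (rule ev4) apply (insert h) by (simp_all add: algebra_simps even_add even_diff)
  next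
    assume h: "even (a-f-h)" "even (b-g)" "even (c+f)" "even (d+e+g)"
    then show ?thesis apply (intro exI[of _ 3]) apply (simp add: q r eval_nat_numeral del: eltq.simps)
      apply (rule ev4) apply (insert h) by (simp_all add: algebra_simps even_add even_diff)
  next
    assume h: "even (a-e-g)" "even (b-f-h)" "even (c+e)" "even (d+f)"
    then show ?thesis apply (intro exI[of _ 4]) apply (simp add: q r eval_nat_numeral del: eltq.simps)
      apply (rule ev4) apply (insert h) by (simp_all add: algebra_simps even_add even_diff)
  next
    assume h: "even (a-f)" "even (b-e-g)" "even (c-h)" "even (d+e)"
    then show ?thesis apply (intro exI[of _ 5]) apply (simp add: q r eval_nat_numeral del: eltq.simps)
      apply (rule ev4) apply (insert h) by (simp_all add: algebra_simps even_add even_diff)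
  qed
  then show ?thesis unfolding E .
qed

definition Zz :: "complex \<Rightarrow> bool" where "Zz x \<longleftrightarrow> (\<exists>q. x = eltq q)"

lemma Zz_eltq[simp]: "Zz (eltq q)" unfolding Zz_def by blast
lemma Zz_add: "Zz x \<Longrightarrow> Zz y \<Longrightarrow> Zz (x + y)" unfolding Zz_def using eltq_add by metis
lemma Zz_neg: "Zz x \<Longrightarrow> Zz (- x)" unfolding Zz_def using eltq_neg by metis
lemma Zz_diff: "Zz x \<Longrightarrow> Zz y \<Longrightarrow> Zz (x - y)" using Zz_add[of x "-y"] Zz_neg[of y] by simp
lemma Zz_mul: "Zz x \<Longrightarrow> Zz y \<Longrightarrow> Zz (x * y)" unfolding Zz_def using eltq_mul by metis
lemma eltq_0: "eltq (0,0,0,0) = 0" by (simp add: complex_eq_iff)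
lemma eltq_1: "eltq (1,0,0,0) = 1" by (simp add: complex_eq_iff)
lemma eltq_i: "eltq (0,0,0,1) = \<i>" by (simp add: complex_eq_iff)
lemma eltq_z: "eltq (0,1,0,0) = zeta12" by (simp add: complex_eq_iff zeta_eq)
lemma Zz_0[simp]: "Zz 0" using Zz_eltq[of "(0,0,0,0)"] eltq_0 by simp
lemma Zz_1[simp]: "Zz 1" using Zz_eltq[of "(1,0,0,0)"] eltq_1 by simp
lemma Zz_i[simp]: "Zz \<i>" using Zz_eltq[of "(0,0,0,1)"] eltq_i by simp
lemma Zz_z[simp]: "Zz zeta12" using Zz_eltq[of "(0,1,0,0)"] eltq_z by simp
lemma delta_eq: "delta = 1 + \<i>" by (simp add: delta_def complex_eq_iff)
lemma Zz_delta[simp]: "Zz delta" unfolding delta_def by (rule Zz_eltq)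
lemma Zz_pow: "Zz x \<Longrightarrow> Zz (x ^ n)" by (induction n) (auto intro: Zz_mul)
lemma delta_nz[simp]: "delta \<noteq> 0" by (simp add: delta_eq complex_eq_iff)
lemma delta_sq: "delta ^ 2 = 2 * \<i>" by (simp add: delta_eq power2_eq_square algebra_simps)
lemma cmod_delta: "(cmod delta)^2 = 2" by (simp add: delta_eq cmod_def)
lemma zeta12_pow12: "zeta12 ^ 12 = 1"
  unfolding zeta12_def DeMoivre by simp
lemma zeta12_pow3: "zeta12 ^ 3 = \<i>"
proof -
  have "real 3 * (2 * pi / 12) = pi / 2" by simp
  then show ?thesis unfolding zeta12_def DeMoivre by (simp add: complex_eq_iff)
qed
lemma zeta12_nz[simp]: "zeta12 \<noteq> 0" by (simp add: zeta12_def)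
lemma cmod_zeta: "cmod zeta12 = 1" by (simp add: zeta12_def)

lemma eltq_eq_AB: "eltq q = eltq r \<Longrightarrow> Aq q = Aq r \<and> Bq q = Bq r"
proof -
  assume "eltq q = eltq r"
  then have "(cmod (eltq q))^2 = (cmod (eltq r))^2" by simp
  then have "of_int (Aq q - Aq r) + of_int (Bq q - Bq r) * sqrt 3 = (0::real)"
    unfolding eltq_norm by (simp add: algebra_simps)
  then show ?thesis using irr3 by fastforce
qed

lemma delta_mult_even: assumes "eltq q = delta * eltq r" shows "even (Aq q) \<and> even (Bq q)"
proof -
  have "(cmod (eltq q))^2 = 2 * (cmod (eltq r))^2" unfolding assms
    by (simp add: norm_mult power_mult_distrib cmod_delta)
  then have "of_int (Aq q - 2 * Aq r) + of_int (Bq q - 2 * Bq r) * sqrt 3 = (0::real)"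
    unfolding eltq_norm by (simp add: algebra_simps)
  then have "Aq q = 2 * Aq r \<and> Bq q = 2 * Bq r" using irr3 by fastforce
  then show ?thesis by simp
qed

lemma eltq_zero_iff: "eltq q = 0 \<Longrightarrow> Aq q = 0 \<and> Bq q = 0"
  using eltq_eq_AB[of q "(0,0,0,0)"] eltq_0 by simp

lemma R12_lde_ex: "x \<in> R12 \<Longrightarrow> \<exists>k. Zz (x * delta ^ k)"
proof (induction rule: R12.induct)
  case half
  have "1/2 * delta^2 = \<i>" by (simp add: delta_sq)
  then show ?case by (metis Zz_i)
next
  case zeta
  then show ?case by (intro exI[of _ 0]) simp
next
  case one
  then show ?case by (intro exI[of _ 0]) simp
next
  case (neg a)
  then show ?case using Zz_neg by fastforce
next
  case (add a b)
  then obtain k l where "Zz (a * delta ^ k)" "Zz (b * delta ^ l)" by blast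
  then have "Zz ((a * delta ^ k) * delta ^ l + (b * delta ^ l) * delta ^ k)"
    by (meson Zz_add Zz_mul Zz_pow Zz_delta)
  then have "Zz ((a + b) * delta ^ (k + l))" by (simp add: algebra_simps power_add)
  then show ?case by blast
next
  case (mult a b)
  then obtain k l where "Zz (a * delta ^ k)" "Zz (b * delta ^ l)" by blast
  then have "Zz ((a * delta ^ k) * (b * delta ^ l))" by (rule Zz_mul)
  then have "Zz ((a * b) * delta ^ (k + l))" by (simp add: algebra_simps power_add)
  then show ?case by blast
qed

definition lde :: "complex \<Rightarrow> nat" where "lde x = (LEAST k. Zz (x * delta ^ k))"

lemma lde_Zz: "x \<in> R12 \<Longrightarrow> Zz (x * delta ^ lde x)"
  unfolding lde_def using R12_lde_ex by (rule LeastI_ex)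
lemma lde_le: "Zz (x * delta ^ k) \<Longrightarrow> lde x \<le> k"
  unfolding lde_def by (rule Least_le)
lemma Zz_mono: assumes "Zz (x * delta ^ k)" "k \<le> n" shows "Zz (x * delta ^ n)"
proof -
  have "x * delta ^ n = (x * delta ^ k) * delta ^ (n - k)" using assms(2)
    by (simp add: power_add[symmetric] mult.assoc)
  then show ?thesis using assms(1) by (metis Zz_mul Zz_pow Zz_delta)
qed
lemma lde_0: "lde 0 = 0" using lde_le[of 0 0] by simp

definition tlv :: "nat \<Rightarrow> complex \<Rightarrow> complex \<Rightarrow> complex \<Rightarrow> complex \<Rightarrow> nat \<Rightarrow> nat \<Rightarrow> complex mat" where
  "tlv m a b c d j j' = mat m m (\<lambda>(r, s).
      if r = j \<and> s = j then a
      else if r = j \<and> s = j' then b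
      else if r = j' \<and> s = j then c
      else if r = j' \<and> s = j' then d
      else if r = s then 1 else 0)"

lemma two_level_tlv: "two_level m M j j' = tlv m (M$$(0,0)) (M$$(0,1)) (M$$(1,0)) (M$$(1,1)) j j'"
  unfolding two_level_def tlv_def ..

definition hh :: complex where "hh = (1 + \<i>) / 2"

lemma X_tlv: "two_level m Xmat j j' = tlv m 0 1 1 0 j j'"
  unfolding two_level_tlv by (simp add: Xmat_def mat_of_rows_list_def)
lemma H_tlv: "two_level m Hprime j j' = tlv m hh hh hh (-hh) j j'"
  unfolding two_level_tlv by (simp add: Hprime_def mat_of_rows_list_def hh_def)

lemma one_level_carrier[simp]: "one_level m c j \<in> carrier_mat m m"
  by (simp add: one_level_def)
lemma tlv_carrier[simp]: "tlv m a b c d j j' \<in> carrier_mat m m"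
  by (simp add: tlv_def)
lemma one_level_dims[simp]: "dim_row (one_level m c j) = m" "dim_col (one_level m c j) = m"
  by (simp_all add: one_level_def)
lemma tlv_dims[simp]: "dim_row (tlv m a b c d j j') = m" "dim_col (tlv m a b c d j j') = m"
  by (simp_all add: tlv_def)

lemma mult_entry: assumes "A \<in> carrier_mat m m" "dim_row U = m" "r < m" "c < dim_col U"
  shows "(A * U) $$ (r,c) = (\<Sum>s = 0..<m. A $$ (r,s) * U $$ (s,c))"
  using assms by (simp add: scalar_prod_def)

lemma one_level_mult: assumes "dim_row U = m" "r < m" "c < dim_col U" "j < m"
  shows "(one_level m a j * U) $$ (r,c) = (if r = j then a * U$$(j,c) else U$$(r,c))"
proof -
  have "(one_level m a j * U) $$ (r,c) = (\<Sum>s = 0..<m. one_level m a j $$ (r,s) * U $$ (s,c))"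
    using assms by (intro mult_entry) auto
  also have "\<dots> = (\<Sum>s = 0..<m. if s = r then (if r = j then a else 1) * U$$(r,c) else 0)"
    by (rule sum.cong) (auto simp: one_level_def assms)
  also have "\<dots> = (if r = j then a else 1) * U$$(r,c)" using assms by simp
  finally show ?thesis by simp
qed

lemma tlv_mult: assumes "dim_row U = m" "r < m" "c < dim_col U" "j < j'" "j' < m"
  shows "(tlv m a b cc d j j' * U) $$ (r,c) =
    (if r = j then a * U$$(j,c) + b * U$$(j',c)
     else if r = j' then cc * U$$(j,c) + d * U$$(j',c) else U$$(r,c))"
proof -
  define al where "al = (if r = j then a else if r = j' then cc else 0)"
  define be where "be = (if r = j then b else if r = j' then d else 0)"
  define ga where "ga = (if r \<noteq> j \<and> r \<noteq> j' then 1 else (0::complex))"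
  have "(tlv m a b cc d j j' * U) $$ (r,c) = (\<Sum>s = 0..<m. tlv m a b cc d j j' $$ (r,s) * U $$ (s,c))"
    using assms by (intro mult_entry) auto
  also have "\<dots> = (\<Sum>s = 0..<m. (if s = j then al * U$$(j,c) else 0) + (if s = j' then be * U$$(j',c) else 0)
       + (if s = r then ga * U$$(r,c) else 0))"
    by (rule sum.cong) (use assms in \<open>auto simp: tlv_def al_def be_def ga_def\<close>)
  also have "\<dots> = al * U$$(j,c) + be * U$$(j',c) + ga * U$$(r,c)"
    using assms by (simp add: sum.distrib)
  finally show ?thesis using assms by (auto simp: al_def be_def ga_def)
qed

lemma one_level_entry: "r < m \<Longrightarrow> s < m \<Longrightarrow> one_level m a j $$ (r,s) = (if r = j \<and> s = j then a else if r = s then 1 else 0)"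
  by (simp add: one_level_def)
lemma tlv_entry: "r < m \<Longrightarrow> s < m \<Longrightarrow> tlv m a b c d j j' $$ (r,s) = (if r = j \<and> s = j then a
      else if r = j \<and> s = j' then b
      else if r = j' \<and> s = j then c
      else if r = j' \<and> s = j' then d
      else if r = s then 1 else 0)"
  by (simp add: tlv_def)

lemma one_level_mult_one_level: "j < m \<Longrightarrow> one_level m a j * one_level m b j = one_level m (a*b) j"
  by (rule eq_matI) (auto simp: one_level_mult one_level_entry simp del: index_mult_mat(1))
lemma one_level_1: "one_level m 1 j = 1\<^sub>m m"
proof (rule eq_matI)
  fix i k assume "i < dim_row (1\<^sub>m m)" "k < dim_col (1\<^sub>m m)"
  then show "one_level m 1 j $$ (i, k) = 1\<^sub>m m $$ (i, k)"
    by (cases "i = k") (simp_all add: one_level_entry)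
qed auto

lemma tlv_mult_tlv: assumes "j < j'" "j' < m"
  shows "tlv m a' b' c' d' j j' * tlv m a b c d j j' = tlv m (a'*a + b'*c) (a'*b + b'*d) (c'*a + d'*c) (c'*b + d'*d) j j'"
  by (rule eq_matI) (use assms in \<open>auto simp: tlv_mult tlv_entry simp del: index_mult_mat(1)\<close>)
lemma tlv_1: "tlv m 1 0 0 1 j j' = 1\<^sub>m m"
proof (rule eq_matI)
  fix i k assume "i < dim_row (1\<^sub>m m)" "k < dim_col (1\<^sub>m m)"
  then show "tlv m 1 0 0 1 j j' $$ (i, k) = 1\<^sub>m m $$ (i, k)"
    by (cases "i = k") (simp_all add: tlv_entry)
qed auto

lemma ct_carrier[simp]: "dim_row (conj_transpose U) = dim_col U" "dim_col (conj_transpose U) = dim_row U"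
  by (simp_all add: conj_transpose_def)
lemma ct_entry[simp]: "i < dim_col U \<Longrightarrow> j < dim_row U \<Longrightarrow> conj_transpose U $$ (i,j) = cnj (U $$ (j,i))"
  by (simp add: conj_transpose_def)
lemma ct_carrier_mat: "U \<in> carrier_mat n m \<Longrightarrow> conj_transpose U \<in> carrier_mat m n"
  by (metis carrier_matD(1) carrier_matD(2) carrier_matI ct_carrier(1) ct_carrier(2))

lemma ct_mult: assumes "A \<in> carrier_mat n k" "B \<in> carrier_mat k p"
  shows "conj_transpose (A * B) = conj_transpose B * conj_transpose A"
proof (rule eq_matI)
  fix i j assume ij: "i < dim_row (conj_transpose B * conj_transpose A)" "j < dim_col (conj_transpose B * conj_transpose A)"
  then have i: "i < p" and j: "j < n" using assms by auto
  have "conj_transpose (A * B) $$ (i,j) = cnj (\<Sum>s = 0..<k. A $$ (j,s) * B $$ (s,i))"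
    using assms i j by (simp add: scalar_prod_def)
  also have "\<dots> = (\<Sum>s = 0..<k. cnj (B $$ (s,i)) * cnj (A $$ (j,s)))"
    by (simp add: cnj_sum mult.commute)
  also have "\<dots> = (conj_transpose B * conj_transpose A) $$ (i,j)"
    using assms i j by (simp add: scalar_prod_def)
  finally show "conj_transpose (A * B) $$ (i,j) = (conj_transpose B * conj_transpose A) $$ (i,j)" .
qed (use assms in auto)

lemma ct_one: "conj_transpose (1\<^sub>m n) = 1\<^sub>m n"
proof (rule eq_matI)
  fix i k assume "i < dim_row (1\<^sub>m n)" "k < dim_col (1\<^sub>m n)"
  then show "conj_transpose (1\<^sub>m n) $$ (i, k) = 1\<^sub>m n $$ (i, k)"
    by (cases "i = k") simp_all
qed auto

lemma ct_one_level: "j < m \<Longrightarrow> conj_transpose (one_level m a j) = one_level m (cnj a) j"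
proof (rule eq_matI)
  fix i k assume "i < dim_row (one_level m (cnj a) j)" "k < dim_col (one_level m (cnj a) j)"
  then show "conj_transpose (one_level m a j) $$ (i, k) = one_level m (cnj a) j $$ (i, k)"
    by (cases "i = k"; cases "i = j") (simp_all add: one_level_entry)
qed auto
lemma ct_tlv: assumes "j < j'" "j' < m" shows "conj_transpose (tlv m a b c d j j') = tlv m (cnj a) (cnj c) (cnj b) (cnj d) j j'"
proof (rule eq_matI)
  fix i k assume "i < dim_row (tlv m (cnj a) (cnj c) (cnj b) (cnj d) j j')" "k < dim_col (tlv m (cnj a) (cnj c) (cnj b) (cnj d) j j')"
  then show "conj_transpose (tlv m a b c d j j') $$ (i, k) = tlv m (cnj a) (cnj c) (cnj b) (cnj d) j j' $$ (i, k)"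
    using assms by (cases "i = j"; cases "i = j'"; cases "k = j"; cases "k = j'"; cases "i = k") (simp_all add: tlv_entry)
qed auto

definition prodg :: "nat \<Rightarrow> complex mat list \<Rightarrow> complex mat" where
  "prodg m gs = foldr (\<lambda>g acc. g * acc) gs (1\<^sub>m m)"

lemma prodg_simps[simp]: "prodg m [] = 1\<^sub>m m" "prodg m (g # gs) = g * prodg m gs"
  by (simp_all add: prodg_def)

lemma prodg_carrier: "set gs \<subseteq> carrier_mat m m \<Longrightarrow> prodg m gs \<in> carrier_mat m m"
  by (induction gs) auto

lemma prodg_append: "set gs \<subseteq> carrier_mat m m \<Longrightarrow> set hs \<subseteq> carrier_mat m m \<Longrightarrow>
    prodg m (gs @ hs) = prodg m gs * prodg m hs"
proof (induction gs)
  case Nil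
  then show ?case using prodg_carrier[of hs m] by simp
next
  case (Cons g gs)
  then have g: "g \<in> carrier_mat m m" and gs: "set gs \<subseteq> carrier_mat m m" by auto
  have "prodg m ((g # gs) @ hs) = g * (prodg m gs * prodg m hs)" using Cons gs by simp
  also have "\<dots> = (g * prodg m gs) * prodg m hs"
    using g prodg_carrier[OF gs] prodg_carrier[OF Cons.prems(2)] by (simp add: assoc_mult_mat)
  finally show ?case by simp
qed

lemma is_product_of_iff: "is_product_of m S U \<longleftrightarrow> (\<exists>gs. set gs \<subseteq> S \<and> U = prodg m gs)"
  unfolding is_product_of_def prodg_def ..

lemma generators_carrier: "generators m \<subseteq> carrier_mat m m"
  unfolding generators_def by (auto simp: X_tlv H_tlv)

lemma prodg_rep_one: "j < m \<Longrightarrow> prodg m (replicate n (one_level m a j)) = one_level m (a ^ n) j"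
  by (induction n) (auto simp: one_level_1 one_level_mult_one_level)

lemma zeta_gen: "j < m \<Longrightarrow> one_level m zeta12 j \<in> generators m"
  unfolding generators_def by blast
lemma X_gen: "j < j' \<Longrightarrow> j' < m \<Longrightarrow> tlv m 0 1 1 0 j j' \<in> generators m"
  unfolding generators_def X_tlv[symmetric] by blast
lemma H_gen: "j < j' \<Longrightarrow> j' < m \<Longrightarrow> tlv m hh hh hh (-hh) j j' \<in> generators m"
  unfolding generators_def H_tlv[symmetric] by blast

lemma hh_sq: "hh * hh = \<i> / 2"
  by (simp add: hh_def field_simps algebra_simps)
lemma hh_cnj: "cnj hh * hh = 1/2"
  by (simp add: hh_def field_simps algebra_simps complex_eq_iff)
lemma hh_cnj2: "hh * (cnj hh * 2) = 1"
  using hh_cnj by (simp add: algebra_simps)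
lemma zeta12_pow9: "zeta12 ^ 9 = - \<i>"
proof -
  have "zeta12 ^ 9 = (zeta12 ^ 3) ^ 3" unfolding power_mult[symmetric] by simp
  also have "\<dots> = \<i> ^ 3" by (simp only: zeta12_pow3)
  also have "\<dots> = - \<i>" by (simp add: power3_eq_cube)
  finally show ?thesis .
qed

lemma H_inv_aux: assumes "j < j'" "j' < m"
  shows "one_level m (- \<i>) j * (one_level m (- \<i>) j' * tlv m hh hh hh (-hh) j j') =
     tlv m (- \<i> * hh) (- \<i> * hh) (- \<i> * hh) (\<i> * hh) j j'"
  by (rule eq_matI) (use assms in \<open>auto simp: one_level_mult tlv_entry simp del: index_mult_mat(1)\<close>)

lemma gen_inv: assumes "g \<in> generators m" shows "\<exists>hs. set hs \<subseteq> generators m \<and> prodg m hs * g = 1\<^sub>m m"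
proof -
  consider (Z) j where "j < m" "g = one_level m zeta12 j"
    | (X) j j' where "j < j'" "j' < m" "g = tlv m 0 1 1 0 j j'"
    | (H) j j' where "j < j'" "j' < m" "g = tlv m hh hh hh (-hh) j j'"
    using assms unfolding generators_def X_tlv H_tlv by blast
  then show ?thesis
  proof cases
    case Z
    have "prodg m (replicate 11 g) * g = one_level m (zeta12 ^ 11 * zeta12) j"
      using Z by (simp add: prodg_rep_one one_level_mult_one_level)
    also have "zeta12 ^ 11 * zeta12 = 1" using zeta12_pow12 by (simp add: power_Suc2[symmetric] del: power_Suc)
    finally show ?thesis using Z zeta_gen[of j m] by (intro exI[of _ "replicate 11 g"]) (auto simp: one_level_1)
  next
    case X
    have "prodg m [g] * g = 1\<^sub>m m" using X by (simp add: tlv_mult_tlv tlv_1)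
    then show ?thesis using X X_gen by (intro exI[of _ "[g]"]) auto
  next
    case H
    define hs where "hs = replicate 9 (one_level m zeta12 j) @ replicate 9 (one_level m zeta12 j') @ [g]"
    have hsg: "set hs \<subseteq> generators m" unfolding hs_def using H zeta_gen H_gen by auto
    have "prodg m hs = one_level m (zeta12^9) j * (one_level m (zeta12^9) j' * g)"
      unfolding hs_def using H
      by (simp add: prodg_append prodg_rep_one subset_iff)
    also have "\<dots> = tlv m (- \<i> * hh) (- \<i> * hh) (- \<i> * hh) (\<i> * hh) j j'"
      using H by (simp add: zeta12_pow9 H_inv_aux)
    finally have "prodg m hs * g = tlv m (- \<i> * hh) (- \<i> * hh) (- \<i> * hh) (\<i> * hh) j j' * tlv m hh hh hh (-hh) j j'"
      using H by simp
    also have "\<dots> = tlv m 1 0 0 1 j j'"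
      using H by (simp add: tlv_mult_tlv algebra_simps hh_sq)
    finally show ?thesis using hsg by (auto simp: tlv_1)
  qed
qed

lemma prodg_inv: "set gs \<subseteq> generators m \<Longrightarrow> \<exists>hs. set hs \<subseteq> generators m \<and> prodg m hs * prodg m gs = 1\<^sub>m m"
proof (induction gs)
  case Nil
  then show ?case by (intro exI[of _ "[]"]) auto
next
  case (Cons g gs)
  then obtain hs where hs: "set hs \<subseteq> generators m" "prodg m hs * prodg m gs = 1\<^sub>m m" by auto
  obtain hg where hg: "set hg \<subseteq> generators m" "prodg m hg * g = 1\<^sub>m m" using gen_inv[of g m] Cons.prems by auto
  have C: "set hs \<subseteq> carrier_mat m m" "set hg \<subseteq> carrier_mat m m" "set gs \<subseteq> carrier_mat m m" "g \<in> carrier_mat m m"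
    using hs hg Cons.prems generators_carrier[of m] by auto
  note cs = prodg_carrier[OF C(1)] prodg_carrier[OF C(2)] prodg_carrier[OF C(3)] C(4)
  have "prodg m (hs @ hg) * prodg m (g # gs) = (prodg m hs * prodg m hg) * (g * prodg m gs)"
    using C by (simp add: prodg_append)
  also have "\<dots> = prodg m hs * (prodg m hg * (g * prodg m gs))"
    using cs by (intro assoc_mult_mat) auto
  also have "prodg m hg * (g * prodg m gs) = (prodg m hg * g) * prodg m gs"
    using cs by (intro assoc_mult_mat[symmetric]) auto
  also have "\<dots> = prodg m gs" using hg cs by simp
  also have "prodg m hs * prodg m gs = 1\<^sub>m m" using hs by simp
  finally show ?case using hs hg by (intro exI[of _ "hs @ hg"]) auto
qed

lemma gen_unitary: assumes "g \<in> generators m" shows "conj_transpose g * g = 1\<^sub>m m"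
proof -
  consider (Z) j where "j < m" "g = one_level m zeta12 j"
    | (X) j j' where "j < j'" "j' < m" "g = tlv m 0 1 1 0 j j'"
    | (H) j j' where "j < j'" "j' < m" "g = tlv m hh hh hh (-hh) j j'"
    using assms unfolding generators_def X_tlv H_tlv by blast
  then show ?thesis
  proof cases
    case Z
    have "cnj zeta12 * zeta12 = 1" using cmod_zeta
      by (metis complex_norm_square mult.commute of_real_1 power_one)
    then show ?thesis using Z by (simp add: ct_one_level one_level_mult_one_level one_level_1)
  next
    case X
    then show ?thesis by (simp add: ct_tlv tlv_mult_tlv tlv_1)
  next
    case H
    then show ?thesis by (simp add: ct_tlv tlv_mult_tlv hh_cnj hh_cnj2 algebra_simps tlv_1)
  qed
qed

lemma R12_0: "0 \<in> R12" using R12.add[OF R12.one R12.neg[OF R12.one]] by simp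
lemma R12_diff: "a \<in> R12 \<Longrightarrow> b \<in> R12 \<Longrightarrow> a - b \<in> R12" using R12.add[OF _ R12.neg] by fastforce
lemma R12_pow: "a \<in> R12 \<Longrightarrow> a ^ n \<in> R12" by (induction n) (auto intro: R12.intros)
lemma R12_sum: "(\<And>x. x \<in> S \<Longrightarrow> f x \<in> R12) \<Longrightarrow> sum f S \<in> R12"
  by (induction S rule: infinite_finite_induct) (auto intro: R12.intros R12_0)
lemma R12_i: "\<i> \<in> R12" using R12_pow[OF R12.zeta, of 3] zeta12_pow3 by simp
lemma R12_hh: "hh \<in> R12"
proof -
  have "hh = 1/2 * (1 + \<i>)" by (simp add: hh_def)
  then show ?thesis by (metis R12.half R12.one R12_i R12.add R12.mult)
qed

lemma gen_R12: assumes "g \<in> generators m" "r < m" "s < m" shows "g $$ (r,s) \<in> R12"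
proof -
  consider (Z) j where "j < m" "g = one_level m zeta12 j"
    | (X) j j' where "j < j'" "j' < m" "g = tlv m 0 1 1 0 j j'"
    | (H) j j' where "j < j'" "j' < m" "g = tlv m hh hh hh (-hh) j j'"
    using assms unfolding generators_def X_tlv H_tlv by blast
  then show ?thesis
    by cases (use assms in \<open>auto simp: one_level_entry tlv_entry intro: R12.intros R12_0 R12_hh\<close>)
qed

lemma mult_R12: assumes "A \<in> carrier_mat m m" "B \<in> carrier_mat m m"
  "\<forall>i<m. \<forall>j<m. A $$ (i,j) \<in> R12" "\<forall>i<m. \<forall>j<m. B $$ (i,j) \<in> R12"
  shows "\<forall>i<m. \<forall>j<m. (A * B) $$ (i,j) \<in> R12"
proof (intro allI impI)
  fix i j assume "i < m" "j < m"
  then have "(A * B) $$ (i,j) = (\<Sum>s = 0..<m. A $$ (i,s) * B $$ (s,j))"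
    using assms by (intro mult_entry) auto
  also have "\<dots> \<in> R12" using assms \<open>i < m\<close> \<open>j < m\<close> by (intro R12_sum R12.mult) auto
  finally show "(A * B) $$ (i,j) \<in> R12" .
qed

definition okU :: "nat \<Rightarrow> complex mat \<Rightarrow> bool" where
  "okU m U \<longleftrightarrow> U \<in> carrier_mat m m \<and> conj_transpose U * U = 1\<^sub>m m \<and> (\<forall>i<m. \<forall>j<m. U $$ (i,j) \<in> R12)"

lemma okU_mult: assumes "g \<in> generators m" "okU m U" shows "okU m (g * U)"
proof -
  have g: "g \<in> carrier_mat m m" using assms generators_carrier by auto
  have U: "U \<in> carrier_mat m m" using assms okU_def by auto
  have cg: "conj_transpose g \<in> carrier_mat m m" "conj_transpose U \<in> carrier_mat m m"
    using g U ct_carrier_mat by auto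
  have gU: "g * U \<in> carrier_mat m m" using g U by simp
  have "conj_transpose (g * U) * (g * U) = (conj_transpose U * conj_transpose g) * (g * U)"
    by (simp add: ct_mult[OF g U])
  also have "\<dots> = conj_transpose U * (conj_transpose g * (g * U))"
    by (rule assoc_mult_mat[OF cg(2) cg(1) gU])
  also have "conj_transpose g * (g * U) = (conj_transpose g * g) * U"
    by (rule assoc_mult_mat[symmetric, OF cg(1) g U])
  also have "(conj_transpose g * g) * U = U" using gen_unitary[OF assms(1)] U by simp
  also have "conj_transpose U * U = 1\<^sub>m m" using assms(2) unfolding okU_def by simp
  finally show ?thesis using assms g U mult_R12[OF g U] gen_R12[OF assms(1)] unfolding okU_def by auto
qed

lemma okU_prodg: "set gs \<subseteq> generators m \<Longrightarrow> okU m U \<Longrightarrow> okU m (prodg m gs * U)"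
proof (induction gs)
  case Nil
  then have "1\<^sub>m m * U = U" unfolding okU_def by auto
  then show ?case using Nil by simp
next
  case (Cons g gs)
  then have "okU m (g * (prodg m gs * U))" by (intro okU_mult[of g m]) auto
  moreover have "prodg m (g # gs) * U = g * (prodg m gs * U)"
  proof -
    have "g \<in> carrier_mat m m" "prodg m gs \<in> carrier_mat m m" "U \<in> carrier_mat m m"
      using Cons.prems generators_carrier[of m] prodg_carrier[of gs m] unfolding okU_def by auto
    then show ?thesis by (simp add: assoc_mult_mat)
  qed
  ultimately show ?case by simp
qed

lemma okU_one: "okU m (1\<^sub>m m)"
  by (auto simp: okU_def ct_one intro: R12.intros R12_0)

lemma okU_unitary: "okU m U \<Longrightarrow> unitary_mat U"
  unfolding okU_def unitary_mat_def
  using mat_mult_left_right_inverse ct_carrier_mat by blast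

definition fc :: "nat \<Rightarrow> nat \<Rightarrow> complex mat \<Rightarrow> bool" where
  "fc m k U \<longleftrightarrow> (\<forall>c<k. \<forall>r<m. U $$ (r,c) = (if r = c then 1 else 0))"

definition gab :: "nat \<Rightarrow> nat \<Rightarrow> complex mat set" where
  "gab m k = {one_level m zeta12 j | j. k \<le> j \<and> j < m}
     \<union> {tlv m 0 1 1 0 j j' | j j'. k \<le> j \<and> j < j' \<and> j' < m}
     \<union> {tlv m hh hh hh (-hh) j j' | j j'. k \<le> j \<and> j < j' \<and> j' < m}"

lemma gab_gen: "gab m k \<subseteq> generators m"
  unfolding gab_def using zeta_gen X_gen H_gen by blast

lemma fc_mult: assumes "g \<in> gab m k" "U \<in> carrier_mat m m" "fc m k U" shows "fc m k (g * U)"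
  unfolding fc_def
proof (intro allI impI)
  fix c r assume c: "c < k" and r: "r < m"
  have ck: "c < m" "k \<le> m" using c r assms(1) unfolding gab_def by auto
  have z: "U $$ (s, c) = 0" if "k \<le> s" "s < m" for s
    using assms(3) c that unfolding fc_def by auto
  have dU: "dim_row U = m" "dim_col U = m" using assms(2) by auto
  consider (Z) j where "k \<le> j" "j < m" "g = one_level m zeta12 j"
    | (T) a b cc d j j' where "k \<le> j" "j < j'" "j' < m" "g = tlv m a b cc d j j'"
    using assms(1) unfolding gab_def by blast
  then show "(g * U) $$ (r, c) = (if r = c then 1 else 0)"
  proof cases
    case Z
    then show ?thesis using one_level_mult[OF dU(1) r, of c j zeta12] dU r ck z[of j] assms(3) c
      unfolding fc_def by auto
  next
    case T
    have "(g * U) $$ (r, c) = (if r = j then a * U$$(j,c) + b * U$$(j',c)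
     else if r = j' then cc * U$$(j,c) + d * U$$(j',c) else U$$(r,c))"
      using T tlv_mult[OF dU(1) r, of c j j' a b cc d] dU ck by simp
    also have "\<dots> = (if r = c then 1 else 0)"
      using T z[of j] z[of j'] assms(3) c r unfolding fc_def by auto
    finally show ?thesis .
  qed
qed

lemma fc_prodg: "set gs \<subseteq> gab m k \<Longrightarrow> U \<in> carrier_mat m m \<Longrightarrow> fc m k U \<Longrightarrow> fc m k (prodg m gs * U)"
proof (induction gs)
  case Nil
  then show ?case by simp
next
  case (Cons g gs)
  have C: "g \<in> carrier_mat m m" "prodg m gs \<in> carrier_mat m m"
    using Cons.prems gab_gen[of m k] generators_carrier[of m] prodg_carrier[of gs m] by auto
  have "fc m k (g * (prodg m gs * U))"
    using Cons.IH Cons.prems C by (intro fc_mult[of g m k "prodg m gs * U"]) auto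
  moreover have "prodg m (g # gs) * U = g * (prodg m gs * U)"
    using C Cons.prems by (simp add: assoc_mult_mat)
  ultimately show ?case by simp
qed

lemma ctU_entry: assumes "U \<in> carrier_mat m m" "r < m" "c < m"
  shows "(conj_transpose U * U) $$ (r,c) = (\<Sum>s = 0..<m. cnj (U $$ (s,r)) * U $$ (s,c))"
proof -
  have "(conj_transpose U * U) $$ (r,c) = (\<Sum>s = 0..<m. conj_transpose U $$ (r,s) * U $$ (s,c))"
    using assms ct_carrier_mat[OF assms(1)] by (intro mult_entry) auto
  also have "\<dots> = (\<Sum>s = 0..<m. cnj (U $$ (s,r)) * U $$ (s,c))"
    using assms by (intro sum.cong) auto
  finally show ?thesis .
qed

lemma col_zero: assumes "okU m U" "fc m k U" "k < m" "r < k" shows "U $$ (r,k) = 0"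
proof -
  have U: "U \<in> carrier_mat m m" using assms okU_def by auto
  have "0 = (conj_transpose U * U) $$ (r,k)" using assms unfolding okU_def by auto
  also have "\<dots> = (\<Sum>s = 0..<m. cnj (U $$ (s,r)) * U $$ (s,k))"
    using U assms by (intro ctU_entry) auto
  also have "\<dots> = (\<Sum>s = 0..<m. if s = r then U $$ (r,k) else 0)"
    using assms(2,3,4) unfolding fc_def by (intro sum.cong) auto
  also have "\<dots> = U $$ (r,k)" using assms by simp
  finally show ?thesis by simp
qed

lemma col_norm: assumes "okU m U" "k < m" shows "(\<Sum>s = 0..<m. (cmod (U $$ (s,k)))^2) = 1"
proof -
  have U: "U \<in> carrier_mat m m" using assms okU_def by auto
  have "1 = (conj_transpose U * U) $$ (k,k)" using assms unfolding okU_def by auto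
  also have "\<dots> = (\<Sum>s = 0..<m. cnj (U $$ (s,k)) * U $$ (s,k))"
    using U assms by (intro ctU_entry) auto
  also have "\<dots> = (\<Sum>s = 0..<m. complex_of_real ((cmod (U $$ (s,k)))^2))"
    by (intro sum.cong refl) (metis complex_norm_square mult.commute of_real_power)
  also have "\<dots> = complex_of_real (\<Sum>s = 0..<m. (cmod (U $$ (s,k)))^2)" by simp
  finally show ?thesis by (metis of_real_eq_1_iff)
qed

lemma hh_delta: "hh = delta / 2" by (simp add: hh_def delta_eq)

lemma key_alg: assumes "x * delta ^ n * delta = X" "y * delta ^ n * delta = Y" "X + z * Y = 2 * W"
  shows "(hh * x + hh * (z * y)) * delta ^ n = W"
    "(hh * x - hh * (z * y)) * delta ^ n = W - z * Y"
    "(hh * (z * y) - hh * x) * delta ^ n = z * Y - W"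
proof -
  have e1: "hh * x * delta ^ n = X / 2"
  proof -
    have "hh * x * delta ^ n = (x * delta ^ n * delta) / 2" by (simp add: hh_delta)
    then show ?thesis using assms(1) by simp
  qed
  have e2: "hh * (z * y) * delta ^ n = z * Y / 2"
  proof -
    have "hh * (z * y) * delta ^ n = z * (y * delta ^ n * delta) / 2" by (simp add: hh_delta)
    then show ?thesis using assms(2) by simp
  qed
  have W: "W = X / 2 + z * Y / 2" using assms(3) by (simp add: field_simps)
  have "(hh * x + hh * (z * y)) * delta ^ n = hh * x * delta ^ n + hh * (z * y) * delta ^ n"
    by (simp add: distrib_right)
  then show "(hh * x + hh * (z * y)) * delta ^ n = W" using e1 e2 W by simp
  have "(hh * x - hh * (z * y)) * delta ^ n = hh * x * delta ^ n - hh * (z * y) * delta ^ n"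
    by (simp add: left_diff_distrib)
  then show "(hh * x - hh * (z * y)) * delta ^ n = W - z * Y" using e1 e2 W by simp
  have "(hh * (z * y) - hh * x) * delta ^ n = hh * (z * y) * delta ^ n - hh * x * delta ^ n"
    by (simp add: left_diff_distrib)
  then show "(hh * (z * y) - hh * x) * delta ^ n = z * Y - W" using e1 e2 W by simp
qed

lemma sum_parity_split: assumes "finite S" "i0 \<in> S" "\<forall>j\<in>S - {i0}. even (f j :: int)"
  shows "even (sum f S) = even (f i0)"
proof -
  have "sum f S = f i0 + sum f (S - {i0})" using assms by (simp add: sum.remove)
  moreover have "even (sum f (S - {i0}))" using assms(3) by (intro dvd_sum) auto
  ultimately show ?thesis by simp
qed

lemma col_coords: assumes "okU m U" "k < m" "\<forall>i<m. Zz (U $$ (i,k) * delta ^ n)"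
  shows "\<exists>q. (\<forall>i<m. U $$ (i,k) * delta ^ n = eltq (q i)) \<and>
    (\<Sum>i=0..<m. Aq (q i)) = 2 ^ n \<and> (\<Sum>i=0..<m. Bq (q i)) = 0"
proof -
  have "\<forall>i\<in>{0..<m}. \<exists>r. U $$ (i,k) * delta ^ n = eltq r" using assms(3) unfolding Zz_def by auto
  then obtain q where q: "\<forall>i\<in>{0..<m}. U $$ (i,k) * delta ^ n = eltq (q i)" by (metis bchoice)
  have nq: "(cmod (eltq (q i)))^2 = (cmod (U $$ (i,k)))^2 * 2 ^ n" if "i < m" for i
  proof -
    have e: "eltq (q i) = U $$ (i,k) * delta ^ n" using q that by simp
    have "(cmod (eltq (q i)))^2 = (cmod (U $$ (i,k)))^2 * ((cmod delta)^n)^2"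
      unfolding e by (simp add: norm_mult norm_power power_mult_distrib)
    also have "((cmod delta)^n)^2 = ((cmod delta)^2)^n"
      by (simp flip: power_mult add: mult.commute)
    finally show ?thesis by (simp add: cmod_delta)
  qed
  have "(\<Sum>i=0..<m. (cmod (eltq (q i)))^2) = (\<Sum>i=0..<m. (cmod (U $$ (i,k)))^2) * 2 ^ n"
    using nq by (simp add: sum_distrib_right)
  also have "\<dots> = 2 ^ n" using col_norm[OF assms(1,2)] by simp
  finally have "(\<Sum>i=0..<m. real_of_int (Aq (q i)) + real_of_int (Bq (q i)) * sqrt 3) = 2 ^ n"
    by (simp add: eltq_norm)
  then have "real_of_int ((\<Sum>i=0..<m. Aq (q i)) - 2 ^ n) + real_of_int (\<Sum>i=0..<m. Bq (q i)) * sqrt 3 = 0"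
    by (simp add: sum.distrib sum_distrib_right)
  from irr3[OF this] show ?thesis using q by auto
qed

lemma prodg_cons_mult: assumes "g \<in> carrier_mat m m" "set gs \<subseteq> carrier_mat m m" "U \<in> carrier_mat m m"
  shows "prodg m (g # gs) * U = g * (prodg m gs * U)"
  using assms prodg_carrier[OF assms(2)] by (simp add: assoc_mult_mat)

lemma prodg_append_mult: assumes "set gs \<subseteq> carrier_mat m m" "set hs \<subseteq> carrier_mat m m" "U \<in> carrier_mat m m"
  shows "prodg m (gs @ hs) * U = prodg m gs * (prodg m hs * U)"
  using assms prodg_carrier[OF assms(1)] prodg_carrier[OF assms(2)] by (simp add: prodg_append assoc_mult_mat)

lemma gab_carrier: "gab m k \<subseteq> carrier_mat m m"
  using gab_gen generators_carrier by blast

lemma base_case: assumes "okU m U" "fc m k U" "k < m" "\<forall>i<m. Zz (U $$ (i,k))"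
  shows "\<exists>gs. set gs \<subseteq> gab m k \<and> (\<forall>r<m. (prodg m gs * U) $$ (r,k) = (if r = k then 1 else 0))"
proof -
  have U: "U \<in> carrier_mat m m" and dU: "dim_row U = m" "dim_col U = m" using assms(1) okU_def by auto
  obtain q where q: "\<forall>i<m. U $$ (i,k) = eltq (q i)" and sA: "(\<Sum>i=0..<m. Aq (q i)) = 1"
    using col_coords[of m U k 0] assms by auto
  have "\<exists>p<m. Aq (q p) \<noteq> 0"
  proof (rule ccontr)
    assume "\<not> ?thesis"
    then have "(\<Sum>i=0..<m. Aq (q i)) = 0" by simp
    with sA show False by simp
  qed
  then obtain p where p: "p < m" "Aq (q p) \<noteq> 0" by blast
  have rest: "(\<Sum>i=0..<m. Aq (q i)) = Aq (q p) + (\<Sum>i\<in>{0..<m} - {p}. Aq (q i))"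
    using p by (simp add: sum.remove)
  have rn: "(\<Sum>i\<in>{0..<m} - {p}. Aq (q i)) \<ge> 0" by (intro sum_nonneg) (simp add: A_nonneg)
  have Ap: "Aq (q p) = 1" using rest rn sA p A_nonneg[of "q p"] by linarith
  have "(\<Sum>i\<in>{0..<m} - {p}. Aq (q i)) = 0" using rest sA Ap by linarith
  moreover have fin: "finite ({0..<m} - {p})" by simp
  ultimately have all0: "\<forall>i\<in>{0..<m} - {p}. Aq (q i) = 0"
    using sum_nonneg_eq_0_iff[OF fin, of "\<lambda>i. Aq (q i)"] A_nonneg by blast
  have zero: "U $$ (i,k) = 0" if "i < m" "i \<noteq> p" for i
  proof -
    have "Aq (q i) = 0" using all0 that by simp
    then have "q i = (0,0,0,0)" by (rule A_zero)
    then show ?thesis using q that eltq_0 by simp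
  qed
  obtain t where t: "t < 12" "q p = rotn t (1,0,0,0)" using A_one[OF Ap] by blast
  have Up: "U $$ (p,k) = zeta12 ^ t" using q p t eltq_rotn[of t "(1,0,0,0)"] eltq_1 by simp
  have pk: "k \<le> p"
  proof (rule ccontr)
    assume "\<not> k \<le> p"
    then have "U $$ (p,k) = 0" using col_zero[OF assms(1,2,3)] by simp
    with Up show False by simp
  qed
  define l1 where "l1 = replicate (12 - t) (one_level m zeta12 p)"
  have l1g: "set l1 \<subseteq> gab m k" unfolding l1_def gab_def using pk p by auto
  define V1 where "V1 = prodg m l1 * U"
  have V1: "V1 = one_level m (zeta12 ^ (12 - t)) p * U"
    unfolding V1_def l1_def using p by (simp add: prodg_rep_one)
  have zz: "zeta12 ^ (12 - t) * zeta12 ^ t = 1"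
    using t zeta12_pow12 by (simp flip: power_add)
  have V1e: "V1 $$ (r,k) = (if r = p then 1 else 0)" if "r < m" for r
    using that V1 one_level_mult[OF dU(1) that, of k p] dU assms(3) p Up zz zero by auto
  show ?thesis
  proof (cases "p = k")
    case True
    then show ?thesis using l1g V1e unfolding V1_def by auto
  next
    case False
    then have kp: "k < p" using pk by simp
    define gs where "gs = tlv m 0 1 1 0 k p # l1"
    have gsg: "set gs \<subseteq> gab m k" unfolding gs_def using l1g kp p unfolding gab_def by auto
    have "prodg m gs * U = tlv m 0 1 1 0 k p * V1"
      unfolding gs_def V1_def using l1g gab_carrier[of m k] U by (intro prodg_cons_mult) auto
    moreover have "(tlv m 0 1 1 0 k p * V1) $$ (r,k) = (if r = k then 1 else 0)" if "r < m" for r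
    proof -
      have dV: "dim_row V1 = m" "dim_col V1 = m" unfolding V1 using dU by auto
      show ?thesis using tlv_mult[OF dV(1) that, of k k p 0 1 1 0] dV kp p assms(3) V1e that False by auto
    qed
    ultimately show ?thesis using gsg by auto
  qed
qed

lemma step_case: assumes "okU m U" "fc m k U" "k < m" "i0 < m" "kk > 0"
  "lde (U $$ (i0,k)) = kk" "\<forall>i<m. lde (U $$ (i,k)) \<le> kk"
  and CC: "\<And>n. \<forall>i<m. Zz (U $$ (i,k) * delta ^ n) \<Longrightarrow> \<exists>q. (\<forall>i<m. U $$ (i,k) * delta ^ n = eltq (q i)) \<and>
    (\<Sum>i=0..<m. Aq (q i)) = 2 ^ n \<and> (\<Sum>i=0..<m. Bq (q i)) = 0"
  shows "\<exists>gs. set gs \<subseteq> gab m k \<and> (\<Sum>i=0..<m. lde ((prodg m gs * U) $$ (i,k))) < (\<Sum>i=0..<m. lde (U $$ (i,k)))"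
proof -
  have U: "U \<in> carrier_mat m m" and dU: "dim_row U = m" "dim_col U = m" using assms(1) okU_def by auto
  have R: "U $$ (i,k) \<in> R12" if "i < m" for i using assms(1,3) that okU_def by auto
  have Zk: "\<forall>i<m. Zz (U $$ (i,k) * delta ^ kk)"
    using R assms(7) lde_Zz Zz_mono by blast
  obtain q where q: "\<forall>i<m. U $$ (i,k) * delta ^ kk = eltq (q i)"
    and sA: "(\<Sum>i=0..<m. Aq (q i)) = 2 ^ kk" and sB: "(\<Sum>i=0..<m. Bq (q i)) = 0"
    using CC[OF Zk] by blast
  obtain n where kkn: "kk = Suc n" using assms(5) by (cases kk) auto
  have dpow: "x * delta ^ kk = x * delta ^ n * delta" for x
    unfolding kkn by (simp add: power_Suc2 mult.assoc)
  have cancel: "x * delta ^ n = y" if "x * delta ^ n * delta = delta * y" for x y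
    using that delta_nz by (simp add: mult.commute)
  have odd0: "odd (Aq (q i0) + Bq (q i0))"
  proof (rule ccontr)
    assume "\<not> odd (Aq (q i0) + Bq (q i0))"
    then obtain w where w: "eltq (q i0) = delta * eltq w" using P2 by blast
    have "U $$ (i0,k) * delta ^ n = eltq w" using q assms(4) w dpow cancel by metis
    then have "lde (U $$ (i0,k)) \<le> n" by (intro lde_le) simp
    with assms(6) kkn show False by simp
  qed
  have evS: "even ((2::int) ^ kk)" using kkn by simp
  obtain j where j: "j < m" "j \<noteq> i0" "odd (Aq (q j) + Bq (q j))" "even (Bq (q j)) = even (Bq (q i0))"
  proof (rule ccontr)
    assume "\<not> thesis"
    then have H: "\<forall>j<m. j \<noteq> i0 \<longrightarrow> \<not> (odd (Aq (q j) + Bq (q j)) \<and> even (Bq (q j)) = even (Bq (q i0)))"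
      using that by blast
    show False
    proof (cases "even (Bq (q i0))")
      case True
      have "\<forall>j\<in>{0..<m} - {i0}. even (Aq (q j))"
      proof
        fix j assume "j \<in> {0..<m} - {i0}"
        then have "j < m" "j \<noteq> i0" by auto
        then show "even (Aq (q j))" using H True P1[of "q j"] by auto
      qed
      then have "even (\<Sum>i=0..<m. Aq (q i)) = even (Aq (q i0))"
        using assms(4) by (intro sum_parity_split) auto
      then show False using sA evS odd0 True by simp
    next
      case False
      have "\<forall>j\<in>{0..<m} - {i0}. even (Bq (q j))"
      proof
        fix j assume "j \<in> {0..<m} - {i0}"
        then have "j < m" "j \<noteq> i0" by auto
        then show "even (Bq (q j))" using H False P1[of "q j"] by auto
      qed
      then have "even (\<Sum>i=0..<m. Bq (q i)) = even (Bq (q i0))"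
        using assms(4) by (intro sum_parity_split) auto
      then show False using sB False by simp
    qed
  qed
  obtain t w where tw: "t < 6" "eltq (q i0) + zeta12 ^ t * eltq (q j) = 2 * eltq w"
    using P3[OF odd0 j(3) j(4)[symmetric]] by blast
  have ldej: "lde (U $$ (j,k)) = kk"
  proof (rule ccontr)
    assume "lde (U $$ (j,k)) \<noteq> kk"
    then have "lde (U $$ (j,k)) \<le> n" using assms(7) j(1) kkn by fastforce
    then have "Zz (U $$ (j,k) * delta ^ n)" using lde_Zz[OF R[OF j(1)]] Zz_mono by blast
    then obtain r where r: "U $$ (j,k) * delta ^ n = eltq r" unfolding Zz_def by blast
    have "eltq (q j) = delta * eltq r" using q j(1) dpow r by (metis mult.commute)
    then have "even (Aq (q j)) \<and> even (Bq (q j))" by (rule delta_mult_even)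
    with j(3) show False by simp
  qed
  have nz0: "U $$ (i0,k) \<noteq> 0" using assms(5,6) lde_0 by auto
  have nzj: "U $$ (j,k) \<noteq> 0" using assms(5) ldej lde_0 by auto
  have ki0: "k \<le> i0" using nz0 col_zero[OF assms(1,2,3)] by (meson not_le)
  have kj: "k \<le> j" using nzj col_zero[OF assms(1,2,3)] by (meson not_le)
  define z where "z = zeta12 ^ t"
  define l1 where "l1 = replicate t (one_level m zeta12 j)"
  define V1 where "V1 = prodg m l1 * U"
  have V1: "V1 = one_level m z j * U"
    unfolding V1_def l1_def z_def using j(1) by (simp add: prodg_rep_one)
  have dV1: "dim_row V1 = m" "dim_col V1 = m" using V1 dU by auto
  have V1e: "V1 $$ (r,k) = (if r = j then z * U $$ (j,k) else U $$ (r,k))" if "r < m" for r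
    using one_level_mult[OF dU(1) that, of k j z] dU assms(3) j(1) V1 by auto
  define a where "a = min i0 j"
  define b where "b = max i0 j"
  have ab: "k \<le> a" "a < b" "b < m" using ki0 kj j(1,2) assms(4) unfolding a_def b_def by auto
  define g where "g = tlv m hh hh hh (-hh) a b"
  define gs where "gs = g # l1"
  have gsg: "set gs \<subseteq> gab m k"
    unfolding gs_def g_def l1_def gab_def using ab kj j(1) by auto
  define V where "V = prodg m gs * U"
  have V: "V = g * V1" unfolding V_def gs_def V1_def
    using gsg gab_carrier[of m k] U unfolding gs_def by (intro prodg_cons_mult) auto
  have Ve: "V $$ (r,k) = (if r = a then hh * V1$$(a,k) + hh * V1$$(b,k)
     else if r = b then hh * V1$$(a,k) + (-hh) * V1$$(b,k) else V1$$(r,k))" if "r < m" for r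
    unfolding V g_def using tlv_mult[OF dV1(1) that, of k a b hh hh hh "-hh"] dV1 assms(3) ab by auto
  define x where "x = U $$ (i0,k)"
  define y where "y = U $$ (j,k)"
  have hx: "x * delta ^ n * delta = eltq (q i0)" unfolding x_def using q assms(4) dpow by metis
  have hy: "y * delta ^ n * delta = eltq (q j)" unfolding y_def using q j(1) dpow by metis
  have hX: "eltq (q i0) + z * eltq (q j) = 2 * eltq w" using tw z_def by simp
  have Zzz: "Zz z" unfolding z_def by (simp add: Zz_pow)
  note KA = key_alg[OF hx hy hX]
  have Zi0: "Zz (V $$ (i0,k) * delta ^ n)" and Zj: "Zz (V $$ (j,k) * delta ^ n)"
  proof -
    have "Zz (V $$ (i0,k) * delta ^ n) \<and> Zz (V $$ (j,k) * delta ^ n)"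
    proof (cases "i0 < j")
      case True
      then have "a = i0" "b = j" unfolding a_def b_def by auto
      then have "V $$ (i0,k) = hh * x + hh * (z * y)" "V $$ (j,k) = hh * x - hh * (z * y)"
        using Ve[OF assms(4)] Ve[OF j(1)] V1e[OF assms(4)] V1e[OF j(1)] j(2) x_def y_def by auto
      then show ?thesis using KA Zzz by (simp add: Zz_diff Zz_mul)
    next
      case False
      then have "a = j" "b = i0" using j(2) unfolding a_def b_def by auto
      then have "V $$ (j,k) = hh * x + hh * (z * y)" "V $$ (i0,k) = hh * (z * y) - hh * x"
        using Ve[OF assms(4)] Ve[OF j(1)] V1e[OF assms(4)] V1e[OF j(1)] j(2) x_def y_def
        by (auto simp: algebra_simps)
      then show ?thesis using KA Zzz by (simp add: Zz_diff Zz_mul)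
    qed
    then show "Zz (V $$ (i0,k) * delta ^ n)" "Zz (V $$ (j,k) * delta ^ n)" by auto
  qed
  have other: "V $$ (r,k) = U $$ (r,k)" if "r < m" "r \<noteq> i0" "r \<noteq> j" for r
  proof -
    have "r \<noteq> a" "r \<noteq> b" using that unfolding a_def b_def by auto
    then show ?thesis using Ve[OF that(1)] V1e[OF that(1)] that by auto
  qed
  have le: "\<forall>i\<in>{0..<m}. lde (V $$ (i,k)) \<le> lde (U $$ (i,k))"
  proof
    fix i assume "i \<in> {0..<m}"
    then have i: "i < m" by simp
    show "lde (V $$ (i,k)) \<le> lde (U $$ (i,k))"
    proof (cases "i = i0 \<or> i = j")
      case True
      then show ?thesis using lde_le[OF Zi0] lde_le[OF Zj] assms(6) ldej kkn by auto
    next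
      case False
      then show ?thesis using other[OF i] by auto
    qed
  qed
  have lt: "\<exists>i\<in>{0..<m}. lde (V $$ (i,k)) < lde (U $$ (i,k))"
    using lde_le[OF Zi0] assms(4,6) kkn by (intro bexI[of _ i0]) auto
  have "(\<Sum>i=0..<m. lde (V $$ (i,k))) < (\<Sum>i=0..<m. lde (U $$ (i,k)))"
    by (rule sum_strict_mono_ex1[OF _ le lt]) simp
  then show ?thesis using gsg unfolding V_def by blast
qed

lemma colred: assumes "k < m" "okU m U" "fc m k U"
  shows "\<exists>gs. set gs \<subseteq> gab m k \<and> (\<forall>r<m. (prodg m gs * U) $$ (r,k) = (if r = k then 1 else 0))"
  using assms
proof (induction "\<Sum>i=0..<m. lde (U $$ (i,k))" arbitrary: U rule: less_induct)
  case less
  define kk where "kk = Max ((\<lambda>i. lde (U $$ (i,k))) ` {0..<m})"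
  have ne: "{0..<m} \<noteq> {}" using less.prems by auto
  have le: "\<forall>i<m. lde (U $$ (i,k)) \<le> kk" unfolding kk_def by (auto intro: Max_ge)
  have "kk \<in> (\<lambda>i. lde (U $$ (i,k))) ` {0..<m}" unfolding kk_def using ne by (intro Max_in) auto
  then obtain i0 where i0: "i0 < m" "lde (U $$ (i0,k)) = kk" by auto
  have U: "U \<in> carrier_mat m m" using less.prems okU_def by auto
  show ?case
  proof (cases "kk = 0")
    case True
    have "\<forall>i<m. Zz (U $$ (i,k))"
    proof (intro allI impI)
      fix i assume i: "i < m"
      then have "U $$ (i,k) \<in> R12" using less.prems okU_def by auto
      from lde_Zz[OF this] show "Zz (U $$ (i,k))" using le i True by simp
    qed
    then show ?thesis using base_case less.prems by blast
  next
    case False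
    obtain gs where gs: "set gs \<subseteq> gab m k"
      "(\<Sum>i=0..<m. lde ((prodg m gs * U) $$ (i,k))) < (\<Sum>i=0..<m. lde (U $$ (i,k)))"
      using step_case[OF less.prems(2,3,1) i0(1) _ i0(2) le col_coords[OF less.prems(2,1)]] False by blast
    define V where "V = prodg m gs * U"
    have okV: "okU m V" unfolding V_def using gs(1) gab_gen less.prems by (intro okU_prodg) auto
    have fcV: "fc m k V" unfolding V_def using gs(1) U less.prems by (intro fc_prodg) auto
    obtain gs' where gs': "set gs' \<subseteq> gab m k" "\<forall>r<m. (prodg m gs' * V) $$ (r,k) = (if r = k then 1 else 0)"
      using less.hyps[OF gs(2)[folded V_def] less.prems(1) okV fcV] by blast
    have "prodg m (gs' @ gs) * U = prodg m gs' * V"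
      unfolding V_def using gs'(1) gs(1) gab_carrier[of m k] U by (intro prodg_append_mult) auto
    then show ?thesis using gs'(2) gs'(1) gs(1) by (intro exI[of _ "gs' @ gs"]) auto
  qed
qed

lemma main: "k \<le> m \<Longrightarrow> okU m U \<Longrightarrow> fc m k U \<Longrightarrow> \<exists>gs. set gs \<subseteq> generators m \<and> U = prodg m gs"
proof (induction "m - k" arbitrary: k U)
  case 0
  then have km: "k = m" by simp
  have U: "U \<in> carrier_mat m m" using 0 okU_def by auto
  have "U = 1\<^sub>m m"
  proof (rule eq_matI)
    fix i j assume "i < dim_row (1\<^sub>m m)" "j < dim_col (1\<^sub>m m)"
    then show "U $$ (i,j) = 1\<^sub>m m $$ (i,j)" using 0 km unfolding fc_def by auto
  qed (use U in auto)
  then show ?case by (intro exI[of _ "[]"]) auto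
next
  case (Suc d)
  then have km: "k < m" by simp
  have U: "U \<in> carrier_mat m m" using Suc okU_def by auto
  obtain gs where gs: "set gs \<subseteq> gab m k" "\<forall>r<m. (prodg m gs * U) $$ (r,k) = (if r = k then 1 else 0)"
    using colred[OF km Suc.prems(2,3)] by blast
  define V where "V = prodg m gs * U"
  have gsg: "set gs \<subseteq> generators m" using gs(1) gab_gen by blast
  have okV: "okU m V" unfolding V_def using gsg Suc.prems by (intro okU_prodg) auto
  have fcV: "fc m k V" unfolding V_def using gs(1) U Suc.prems by (intro fc_prodg) auto
  have fcV': "fc m (Suc k) V" using fcV gs(2) unfolding fc_def V_def by (auto simp: less_Suc_eq)
  have dd: "d = m - Suc k" using Suc.hyps(2) by arith
  obtain vs where vs: "set vs \<subseteq> generators m" "V = prodg m vs"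
    using Suc.hyps(1)[OF dd _ okV fcV'] km by auto
  obtain hs where hs: "set hs \<subseteq> generators m" "prodg m hs * prodg m gs = 1\<^sub>m m"
    using prodg_inv[OF gsg] by blast
  have C: "set hs \<subseteq> carrier_mat m m" "set gs \<subseteq> carrier_mat m m" "set vs \<subseteq> carrier_mat m m"
    using hs(1) gsg vs(1) generators_carrier[of m] by auto
  have "U = (prodg m hs * prodg m gs) * U" using hs(2) U by simp
  also have "\<dots> = prodg m hs * V" unfolding V_def
    using prodg_carrier[OF C(1)] prodg_carrier[OF C(2)] U by (simp add: assoc_mult_mat)
  also have "\<dots> = prodg m (hs @ vs)" using vs(2) C by (simp add: prodg_append)
  finally show ?case using hs(1) vs(1) by (intro exI[of _ "hs @ vs"]) auto
qed

theorem theorem7p6: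
  fixes U :: "complex mat" and m :: nat
  assumes "U \<in> carrier_mat m m"
  shows "(unitary_mat U \<and> (\<forall>i<m. \<forall>j<m. U $$ (i, j) \<in> R12)) \<longleftrightarrow>
         is_product_of m (generators m) U"
proof
  assume H: "unitary_mat U \<and> (\<forall>i<m. \<forall>j<m. U $$ (i, j) \<in> R12)"
  then obtain n where n: "U \<in> carrier_mat n n" "conj_transpose U * U = 1\<^sub>m n"
    unfolding unitary_mat_def by blast
  then have "n = m" using assms by auto
  then have "okU m U" using n H assms unfolding okU_def by auto
  moreover have "fc m 0 U" unfolding fc_def by simp
  ultimately show "is_product_of m (generators m) U"
    using main[of 0 m U] unfolding is_product_of_iff by auto
next
  assume "is_product_of m (generators m) U"
  then obtain gs where gs: "set gs \<subseteq> generators m" "U = prodg m gs" unfolding is_product_of_iff by blast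
  have "okU m (prodg m gs * 1\<^sub>m m)" using okU_prodg[OF gs(1) okU_one] .
  moreover have "prodg m gs * 1\<^sub>m m = prodg m gs"
  proof -
    have "prodg m gs \<in> carrier_mat m m" using gs(1) generators_carrier[of m] by (intro prodg_carrier) auto
    then show ?thesis by simp
  qed
  ultimately have "okU m U" using gs(2) by simp
  then show "unitary_mat U \<and> (\<forall>i<m. \<forall>j<m. U $$ (i, j) \<in> R12)"
    using okU_unitary unfolding okU_def by auto
qed

end
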